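(* Let $(C,0)\subset\mathbb{A}^n$ be a homogeneous reduced curve singularity (the cone over a finite set of points in $\mathbb{P}^{n-1}$, all coordinates of weight $1$), with graded coordinate ring $\mathcal{O}$ and graded total ring of fractions $K$. For every integer $\ell$, if $K_{\ell+1}=\mathcal{O}_{\ell+1}$ then $T^1_\ell=0$. In particular, if $C=L_r^n$ is the cone over $r$ points of $\mathbb{P}^{n-1}$ in general position and $d$ is the integer with $\binom{n+d-2}{d-1}<r\le\binom{n+d-1}{d}$, then $T^1_\ell=0$ for all $\ell\ge d-1$.
   Context: The ground field $\k$ is algebraically closed of characteristic $0$. For a cone $C$ over $r$ points, $K\cong\prod_{i=1}^r\k[t_i,t_i^{-1}]$ graded by $\deg t_i=1$, and $\mathcal{O}=\k[x_1,\dots,x_n]/I\subset K$ with $I$ homogeneous. $T^1=T^1(C,0)=\operatorname{Coker}\big(\Theta_n\otimes\mathcal{O}\to\operatorname{Hom}_{\mathcal{O}_n}(I,\mathcal{O})\big)$, where $\Theta_n\otimes\mathcal{O}$ is the free module on $\partial/\partial x_i$; it is graded, $T^1_\ell$ being the image of homomorphisms sending each homogeneous generator of $I$ of degree $q$ to an element of degree $q+\ell$ (so $\ell<0$ corresponds to deformations of negative weight). A point set in $\mathbb{P}^{n-1}$ of $r$ points is in general position if for every $\ell\ge1$ it imposes $\min(r,\binom{n+\ell-1}{\ell})$ independent conditions on forms of degree $\ell$. *)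

theory Defs
  imports "HOL-Library.Poly_Mapping" "HOL-Library.Function_Algebras" "HOL-Computational_Algebra.Polynomial"
begin

text \<open>A monomial in the variables x_0, x_1, ... is an exponent vector nat =>0 nat;
a polynomial is a finitely supported map from monomials to coefficients.\<close>

type_synonym 'k mpoly = "(nat \<Rightarrow>\<^sub>0 nat) \<Rightarrow>\<^sub>0 'k"

definition mdeg :: "(nat \<Rightarrow>\<^sub>0 nat) \<Rightarrow> nat" where
  "mdeg m = (\<Sum>j\<in>Poly_Mapping.keys m. Poly_Mapping.lookup m j)"

definition polys :: "nat \<Rightarrow> 'k::comm_ring_1 mpoly set" where
  "polys n = {f. \<forall>m\<in>Poly_Mapping.keys f. Poly_Mapping.keys m \<subseteq> {..<n}}"

text \<open>Homogeneous of (integer) degree q; the zero polynomial is homogeneous of every degree.\<close>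
definition homog :: "int \<Rightarrow> 'k::comm_ring_1 mpoly \<Rightarrow> bool" where
  "homog q f \<longleftrightarrow> (\<forall>m\<in>Poly_Mapping.keys f. int (mdeg m) = q)"

definition hcomp :: "nat \<Rightarrow> 'k::comm_ring_1 mpoly \<Rightarrow> 'k mpoly" where
  "hcomp e f = (\<Sum>m\<in>{m\<in>Poly_Mapping.keys f. mdeg m = e}. Poly_Mapping.single m (Poly_Mapping.lookup f m))"

definition peval :: "'k::comm_ring_1 mpoly \<Rightarrow> (nat \<Rightarrow> 'k) \<Rightarrow> 'k" where
  "peval f x = (\<Sum>m\<in>Poly_Mapping.keys f. Poly_Mapping.lookup f m * (\<Prod>j\<in>Poly_Mapping.keys m. x j ^ Poly_Mapping.lookup m j))"

definition pderiv_var :: "nat \<Rightarrow> 'k::comm_ring_1 mpoly \<Rightarrow> 'k mpoly" where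
  "pderiv_var j f = (\<Sum>m\<in>Poly_Mapping.keys f.
      Poly_Mapping.single (m - Poly_Mapping.single j 1) (of_nat (Poly_Mapping.lookup m j) * Poly_Mapping.lookup f m))"

text \<open>The points are given by representatives P 0, ..., P (r-1) in k^n (coordinates j < n).
The cone C is the union of the lines through them; its (reduced) ideal I consists of
the polynomials vanishing on C.\<close>

definition cone_ideal :: "nat \<Rightarrow> nat \<Rightarrow> (nat \<Rightarrow> nat \<Rightarrow> 'k::comm_ring_1) \<Rightarrow> 'k mpoly set" where
  "cone_ideal n r P = {f \<in> polys n. \<forall>i<r. \<forall>t. peval f (\<lambda>j. t * P i j) = 0}"

text \<open>Total ring of fractions K = prod_{i<r} k[t_i, t_i^{-1}], an element being encoded by
its coefficient function (i, e) |-> coefficient of t_i^e (finitely supported, i < r).\<close>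

definition K_deg :: "nat \<Rightarrow> int \<Rightarrow> (nat \<Rightarrow> int \<Rightarrow> 'k::comm_ring_1) set" where
  "K_deg r m = {c. \<forall>i e. c i e \<noteq> 0 \<longrightarrow> i < r \<and> e = m}"

text \<open>The embedding O = k[x]/I into K, x_j |-> (P i j * t_i)_i.\<close>
definition embK :: "nat \<Rightarrow> (nat \<Rightarrow> nat \<Rightarrow> 'k::comm_ring_1) \<Rightarrow> 'k mpoly \<Rightarrow> nat \<Rightarrow> int \<Rightarrow> 'k" where
  "embK r P f = (\<lambda>i e. if i < r \<and> 0 \<le> e then peval (hcomp (nat e) f) (P i) else 0)"

definition O_deg :: "nat \<Rightarrow> nat \<Rightarrow> (nat \<Rightarrow> nat \<Rightarrow> 'k::comm_ring_1) \<Rightarrow> int \<Rightarrow> (nat \<Rightarrow> int \<Rightarrow> 'k) set" where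
  "O_deg n r P m = (embK r P ` polys n) \<inter> K_deg r m"

text \<open>Elements of O are represented by polynomials modulo I. A homomorphism of O_n-modules
I -> O is represented by a map phi from I to polynomials, additive and O_n-linear modulo I.\<close>

definition graded_hom :: "nat \<Rightarrow> 'k::comm_ring_1 mpoly set \<Rightarrow> int \<Rightarrow> ('k mpoly \<Rightarrow> 'k mpoly) \<Rightarrow> bool" where
  "graded_hom n I l \<phi> \<longleftrightarrow>
     (\<forall>f\<in>I. \<phi> f \<in> polys n) \<and>
     (\<forall>f\<in>I. \<forall>g\<in>I. \<phi> (f + g) - (\<phi> f + \<phi> g) \<in> I) \<and>
     (\<forall>h\<in>polys n. \<forall>f\<in>I. \<phi> (h * f) - h * \<phi> f \<in> I) \<and>
     (\<forall>q. \<forall>f\<in>I. homog q f \<longrightarrow> (\<exists>g\<in>polys n. homog (q + l) g \<and> \<phi> f - g \<in> I))"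

text \<open>Image of (Theta_n (x) O)_l: the homomorphisms f |-> sum_j a_j * df/dx_j with a_j in O_{l+1}.\<close>
definition derivation_hom :: "nat \<Rightarrow> 'k::comm_ring_1 mpoly set \<Rightarrow> int \<Rightarrow> ('k mpoly \<Rightarrow> 'k mpoly) \<Rightarrow> bool" where
  "derivation_hom n I l \<phi> \<longleftrightarrow>
     (\<exists>a. (\<forall>j<n. a j \<in> polys n \<and> homog (l + 1) (a j)) \<and>
          (\<forall>f\<in>I. \<phi> f - (\<Sum>j<n. a j * pderiv_var j f) \<in> I))"

text \<open>T^1_l = 0: every graded homomorphism of degree l lies in the image of Theta_n (x) O.\<close>
definition T1_vanishes :: "nat \<Rightarrow> 'k::comm_ring_1 mpoly set \<Rightarrow> int \<Rightarrow> bool" where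
  "T1_vanishes n I l \<longleftrightarrow> (\<forall>\<phi>. graded_hom n I l \<phi> \<longrightarrow> derivation_hom n I l \<phi>)"

text \<open>Number of independent conditions the points impose on forms of degree l:
the dimension of the image of the evaluation map from forms of degree l to k^r.\<close>
definition eval_vectors :: "nat \<Rightarrow> nat \<Rightarrow> (nat \<Rightarrow> nat \<Rightarrow> 'k::field) \<Rightarrow> nat \<Rightarrow> (nat \<Rightarrow> 'k) set" where
  "eval_vectors n r P l =
     {(\<lambda>i. if i < r then peval f (P i) else 0) | f. f \<in> polys n \<and> homog (int l) f}"

definition conditions_imposed :: "nat \<Rightarrow> nat \<Rightarrow> (nat \<Rightarrow> nat \<Rightarrow> 'k::field) \<Rightarrow> nat \<Rightarrow> nat" where
  "conditions_imposed n r P l =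
     vector_space.dim (\<lambda>c (v :: nat \<Rightarrow> 'k). (\<lambda>i. c * v i)) (eval_vectors n r P l)"

definition general_position :: "nat \<Rightarrow> nat \<Rightarrow> (nat \<Rightarrow> nat \<Rightarrow> 'k::field) \<Rightarrow> bool" where
  "general_position n r P \<longleftrightarrow>
     (\<forall>l\<ge>1. conditions_imposed n r P l = min r ((n + l - 1) choose l))"

text \<open>r distinct points of P^{n-1}: nonzero representatives, pairwise non-proportional.\<close>
definition proj_points :: "nat \<Rightarrow> nat \<Rightarrow> (nat \<Rightarrow> nat \<Rightarrow> 'k::field) \<Rightarrow> bool" where
  "proj_points n r P \<longleftrightarrow>
     (\<forall>i<r. \<exists>j<n. P i j \<noteq> 0) \<and>
     (\<forall>i<r. \<forall>i'<r. i \<noteq> i' \<longrightarrow> \<not> (\<exists>c. \<forall>j<n. P i j = c * P i' j))"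

end

theory Submission
  imports Defs
begin



definition mon :: "(nat \<Rightarrow>\<^sub>0 nat) \<Rightarrow> (nat \<Rightarrow> 'k::comm_ring_1) \<Rightarrow> 'k" where
  "mon m x = (\<Prod>j\<in>Poly_Mapping.keys m. x j ^ Poly_Mapping.lookup m j)"

lemma mon_superset:
  assumes "finite S" "Poly_Mapping.keys m \<subseteq> S"
  shows "mon m x = (\<Prod>j\<in>S. x j ^ Poly_Mapping.lookup m j)"
  unfolding mon_def
  by (rule prod.mono_neutral_left) (use assms in \<open>auto simp: in_keys_iff\<close>)

lemma mon_add: "mon (m + m') x = mon m x * mon m' x"
proof -
  let ?S = "Poly_Mapping.keys m \<union> Poly_Mapping.keys m'"
  have "mon (m + m') x = (\<Prod>j\<in>?S. x j ^ Poly_Mapping.lookup (m + m') j)"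
    by (rule mon_superset) (auto dest: keys_add[THEN subsetD])
  also have "\<dots> = (\<Prod>j\<in>?S. x j ^ Poly_Mapping.lookup m j) * (\<Prod>j\<in>?S. x j ^ Poly_Mapping.lookup m' j)"
    by (simp add: lookup_add power_add prod.distrib)
  also have "\<dots> = mon m x * mon m' x"
    using mon_superset[of ?S m x] mon_superset[of ?S m' x] by simp
  finally show ?thesis .
qed

lemma mon_zero[simp]: "mon 0 x = 1" by (simp add: mon_def)

lemma mon_single1[simp]: "mon (Poly_Mapping.single j 1) x = x j"
  by (simp add: mon_def)

lemma mon_scale: "mon m (\<lambda>j. t * x j) = t ^ mdeg m * mon m x"
  by (simp add: mon_def mdeg_def power_mult_distrib prod.distrib power_sum)

lemma peval_mon: "peval f x = (\<Sum>m\<in>Poly_Mapping.keys f. Poly_Mapping.lookup f m * mon m x)"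
  by (simp add: peval_def mon_def)

lemma peval_superset:
  assumes "finite S" "Poly_Mapping.keys f \<subseteq> S"
  shows "peval f x = (\<Sum>m\<in>S. Poly_Mapping.lookup f m * mon m x)"
  unfolding peval_mon
  by (rule sum.mono_neutral_left) (use assms in \<open>auto simp: in_keys_iff\<close>)

lemma peval_add: "peval (f + g) x = peval f x + peval g x"
proof -
  let ?S = "Poly_Mapping.keys f \<union> Poly_Mapping.keys g"
  have "peval (f + g) x = (\<Sum>m\<in>?S. Poly_Mapping.lookup (f+g) m * mon m x)"
    by (rule peval_superset) (auto dest: keys_add[THEN subsetD])
  also have "\<dots> = peval f x + peval g x"
    by (simp add: lookup_add distrib_right sum.distrib peval_superset[of ?S])
  finally show ?thesis .
qed

lemma peval_zero[simp]: "peval 0 x = 0" by (simp add: peval_def)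

lemma peval_uminus: "peval (- f) x = - peval f x"
  using peval_add[of f "-f" x] by (simp add: add_eq_0_iff)

lemma peval_diff: "peval (f - g) x = peval f x - peval g x"
  using peval_add[of f "-g" x] by (simp add: peval_uminus)

lemma peval_sum: "peval (\<Sum>a\<in>A. F a) x = (\<Sum>a\<in>A. peval (F a) x)"
  by (induction A rule: infinite_finite_induct) (auto simp: peval_add)

lemma peval_single: "peval (Poly_Mapping.single m c) x = c * mon m x"
  by (simp add: peval_mon)

lemma poly_sum_singles:
  "f = (\<Sum>m\<in>Poly_Mapping.keys f. Poly_Mapping.single m (Poly_Mapping.lookup f m))"
  by (rule poly_mapping_eqI)
     (auto simp: lookup_sum lookup_single when_def in_keys_iff sum.delta)

lemma peval_mult_single: "peval (Poly_Mapping.single m a * g) x = a * mon m x * peval g x"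
proof -
  have "Poly_Mapping.single m a * g = (\<Sum>m'\<in>Poly_Mapping.keys g. Poly_Mapping.single m a * Poly_Mapping.single m' (Poly_Mapping.lookup g m'))"
    by (subst poly_sum_singles[of g]) (simp add: sum_distrib_left)
  then have "peval (Poly_Mapping.single m a * g) x = (\<Sum>m'\<in>Poly_Mapping.keys g. a * mon m x * (Poly_Mapping.lookup g m' * mon m' x))"
    by (simp add: peval_sum mult_single peval_single mon_add algebra_simps)
  then show ?thesis by (simp add: peval_mon sum_distrib_left)
qed

lemma peval_mult: "peval (f * g) x = peval f x * peval g x"
proof -
  have "f * g = (\<Sum>m\<in>Poly_Mapping.keys f. Poly_Mapping.single m (Poly_Mapping.lookup f m) * g)"
    by (subst poly_sum_singles[of f]) (simp add: sum_distrib_right)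
  then have "peval (f * g) x = (\<Sum>m\<in>Poly_Mapping.keys f. peval (Poly_Mapping.single m (Poly_Mapping.lookup f m) * g) x)"
    by (simp only: peval_sum)
  also have "\<dots> = (\<Sum>m\<in>Poly_Mapping.keys f. Poly_Mapping.lookup f m * mon m x * peval g x)"
    by (simp only: peval_mult_single)
  also have "\<dots> = peval f x * peval g x"
    by (simp add: peval_mon[of f] sum_distrib_right)
  finally show ?thesis .
qed

lemma peval_one[simp]: "peval 1 x = 1"
  by (simp add: peval_mon)

lemma peval_prod: "peval (\<Prod>a\<in>A. F a) x = (\<Prod>a\<in>A. peval (F a) x)"
  by (induction A rule: infinite_finite_induct) (auto simp: peval_mult)




abbreviation "lk \<equiv> Poly_Mapping.lookup"
abbreviation "ks \<equiv> Poly_Mapping.keys"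
abbreviation "sg \<equiv> Poly_Mapping.single"

lemma mdeg_superset:
  assumes "finite S" "ks m \<subseteq> S"
  shows "mdeg m = (\<Sum>j\<in>S. lk m j)"
  unfolding mdeg_def
  by (rule sum.mono_neutral_left) (use assms in \<open>auto simp: in_keys_iff\<close>)

lemma mdeg_add: "mdeg (m + m') = mdeg m + mdeg m'"
proof -
  let ?S = "ks m \<union> ks m'"
  have "mdeg (m + m') = (\<Sum>j\<in>?S. lk (m + m') j)"
    by (rule mdeg_superset) (auto dest: keys_add[THEN subsetD])
  also have "\<dots> = (\<Sum>j\<in>?S. lk m j) + (\<Sum>j\<in>?S. lk m' j)"
    by (simp add: lookup_add sum.distrib)
  also have "\<dots> = mdeg m + mdeg m'"
    using mdeg_superset[of ?S m] mdeg_superset[of ?S m'] by simp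
  finally show ?thesis .
qed

lemma mdeg_zero[simp]: "mdeg 0 = 0" by (simp add: mdeg_def)
lemma mdeg_single[simp]: "mdeg (sg j k) = k" by (simp add: mdeg_def)

lemma minus_single_add:
  assumes "lk m j \<ge> 1"
  shows "m = (m - sg j 1) + sg j (1::nat)"
  by (rule poly_mapping_eqI) (use assms in \<open>auto simp: lookup_add lookup_minus lookup_single when_def\<close>)

lemma mdeg_minus_single:
  assumes "lk m j \<ge> 1"
  shows "mdeg (m - sg j 1) = mdeg m - 1"
  using mdeg_add[of "m - sg j 1" "sg j 1"] minus_single_add[OF assms] by simp

lemma mon_minus_single:
  assumes "lk m j \<ge> 1"
  shows "mon m x = mon (m - sg j 1) x * x j"
proof -
  have "mon m x = mon ((m - sg j 1) + sg j 1) x"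
    using minus_single_add[OF assms] by metis
  also have "\<dots> = mon (m - sg j 1) x * mon (sg j 1) x" by (rule mon_add)
  also have "mon (sg j 1) x = x j" by (rule mon_single1)
  finally show ?thesis .
qed

lemma polys_iff: "f \<in> polys n \<longleftrightarrow> (\<forall>m\<in>ks f. ks m \<subseteq> {..<n})"
  by (simp add: polys_def)

lemma polys_zero[simp]: "0 \<in> polys n" by (simp add: polys_def)
lemma polys_one[simp]: "1 \<in> polys n" by (simp add: polys_def)
lemma polys_add: "f \<in> polys n \<Longrightarrow> g \<in> polys n \<Longrightarrow> f + g \<in> polys n"
  unfolding polys_def mem_Collect_eq using keys_add[of f g] by blast
lemma polys_uminus: "f \<in> polys n \<Longrightarrow> - f \<in> polys n"
  unfolding polys_def by simp
lemma polys_diff: "f \<in> polys n \<Longrightarrow> g \<in> polys n \<Longrightarrow> f - g \<in> polys n"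
  unfolding polys_def mem_Collect_eq using keys_diff[of f g] by blast
lemma polys_single: "ks m \<subseteq> {..<n} \<Longrightarrow> sg m c \<in> polys n"
  unfolding polys_def by simp
lemma keys_add_nat: "ks (a + b) \<subseteq> ks a \<union> ks (b :: nat \<Rightarrow>\<^sub>0 nat)"
  by (rule keys_add)
lemma polys_mult: "f \<in> polys n \<Longrightarrow> g \<in> polys n \<Longrightarrow> f * g \<in> polys n"
  unfolding polys_def mem_Collect_eq
proof
  fix m assume f: "\<forall>m\<in>ks f. ks m \<subseteq> {..<n}" and g: "\<forall>m\<in>ks g. ks m \<subseteq> {..<n}"
    and m: "m \<in> ks (f * g)"
  then obtain a b where "m = a + b" "a \<in> ks f" "b \<in> ks g" using keys_mult by blast
  then show "ks m \<subseteq> {..<n}" using f g keys_add_nat[of a b] by blast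
qed
lemma polys_sum: "(\<And>a. a \<in> A \<Longrightarrow> F a \<in> polys n) \<Longrightarrow> (\<Sum>a\<in>A. F a) \<in> polys n"
  by (induction A rule: infinite_finite_induct) (auto simp: polys_add)
lemma polys_prod: "(\<And>a. a \<in> A \<Longrightarrow> F a \<in> polys n) \<Longrightarrow> (\<Prod>a\<in>A. F a) \<in> polys n"
  by (induction A rule: infinite_finite_induct) (auto simp: polys_mult)

lemma homog_zero[simp]: "homog q 0" by (simp add: homog_def)
lemma homog_add: "homog q f \<Longrightarrow> homog q g \<Longrightarrow> homog q (f + g)"
  unfolding homog_def using keys_add[of f g] by blast
lemma homog_uminus: "homog q f \<Longrightarrow> homog q (- f)"
  unfolding homog_def by simp
lemma homog_diff: "homog q f \<Longrightarrow> homog q g \<Longrightarrow> homog q (f - g)"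
  unfolding homog_def using keys_diff[of f g] by blast
lemma homog_single: "homog (int (mdeg m)) (sg m c)"
  unfolding homog_def by simp
lemma homog_sum: "(\<And>a. a \<in> A \<Longrightarrow> homog q (F a)) \<Longrightarrow> homog q (\<Sum>a\<in>A. F a)"
  by (induction A rule: infinite_finite_induct) (auto simp: homog_add)
lemma homog_mult: "homog p f \<Longrightarrow> homog q g \<Longrightarrow> homog (p + q) (f * g)"
  unfolding homog_def
proof
  fix m assume f: "\<forall>m\<in>ks f. int (mdeg m) = p" and g: "\<forall>m\<in>ks g. int (mdeg m) = q"
    and m: "m \<in> ks (f * g)"
  then obtain a b where "m = a + b" "a \<in> ks f" "b \<in> ks g" using keys_mult by blast
  then show "int (mdeg m) = p + q" using f g by (auto simp: mdeg_add)
qed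
lemma homog_neg: "q < 0 \<Longrightarrow> homog q f \<Longrightarrow> f = 0"
  unfolding homog_def by (metis all_not_in_conv keys_eq_empty of_nat_less_0_iff)

lemma homog_scale:
  assumes "homog q f"
  shows "peval f (\<lambda>j. t * x j) = t ^ nat q * peval f x"
proof -
  have "peval f (\<lambda>j. t * x j) = (\<Sum>m\<in>ks f. lk f m * (t ^ nat q * mon m x))"
    unfolding peval_mon mon_scale
    by (rule sum.cong) (use assms in \<open>auto simp: homog_def\<close>)
  then show ?thesis by (simp add: peval_mon sum_distrib_left algebra_simps)
qed

lemma lookup_hcomp: "lk (hcomp e f) m = (if mdeg m = e then lk f m else 0)"
  unfolding hcomp_def
  by (auto simp: lookup_sum lookup_single when_def in_keys_iff sum.delta)

lemma keys_hcomp: "ks (hcomp e f) \<subseteq> ks f"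
  by (auto simp: in_keys_iff lookup_hcomp split: if_splits)

lemma hcomp_polys: "f \<in> polys n \<Longrightarrow> hcomp e f \<in> polys n"
  unfolding polys_def mem_Collect_eq using keys_hcomp[of e f] by blast

lemma homog_hcomp: "homog (int e) (hcomp e f)"
  unfolding homog_def by (auto simp: in_keys_iff lookup_hcomp split: if_splits)

lemma hcomp_homog_same: "homog (int e) f \<Longrightarrow> hcomp e f = f"
  by (rule poly_mapping_eqI) (auto simp: lookup_hcomp homog_def in_keys_iff)

lemma hcomp_homog_other: "homog q f \<Longrightarrow> int e \<noteq> q \<Longrightarrow> hcomp e f = 0"
  by (rule poly_mapping_eqI) (auto simp: lookup_hcomp homog_def in_keys_iff)

lemma sum_hcomp:
  assumes "finite E" "mdeg ` ks f \<subseteq> E"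
  shows "(\<Sum>e\<in>E. hcomp e f) = f"
proof (rule poly_mapping_eqI)
  fix m
  have "lk (\<Sum>e\<in>E. hcomp e f) m = (\<Sum>e\<in>E. if mdeg m = e then lk f m else 0)"
    by (simp add: lookup_sum lookup_hcomp)
  also have "\<dots> = lk f m"
    using assms by (auto simp: sum.delta in_keys_iff image_subset_iff)
  finally show "lk (\<Sum>e\<in>E. hcomp e f) m = lk f m" .
qed

lemma peval_scale_hcomp:
  "peval f (\<lambda>j. t * x j) = (\<Sum>e\<in>mdeg ` ks f. t ^ e * peval (hcomp e f) x)"
proof -
  have "peval f (\<lambda>j. t * x j) = peval (\<Sum>e\<in>mdeg ` ks f. hcomp e f) (\<lambda>j. t * x j)"
    by (simp add: sum_hcomp)
  also have "\<dots> = (\<Sum>e\<in>mdeg ` ks f. t ^ e * peval (hcomp e f) x)"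
    by (simp add: peval_sum homog_scale[OF homog_hcomp])
  finally show ?thesis .
qed

lemma pderiv_superset:
  assumes "finite S" "ks f \<subseteq> S"
  shows "pderiv_var j f = (\<Sum>m\<in>S. sg (m - sg j 1) (of_nat (lk m j) * lk f m))"
  unfolding pderiv_var_def
  by (rule sum.mono_neutral_left) (use assms in \<open>auto simp: in_keys_iff\<close>)

lemma pderiv_add: "pderiv_var j (f + g) = pderiv_var j f + pderiv_var j g"
proof -
  let ?S = "ks f \<union> ks g"
  have "pderiv_var j (f + g) = (\<Sum>m\<in>?S. sg (m - sg j 1) (of_nat (lk m j) * lk (f + g) m))"
    by (rule pderiv_superset) (auto dest: keys_add[THEN subsetD])
  also have "\<dots> = pderiv_var j f + pderiv_var j g"
    by (simp add: lookup_add distrib_left single_add sum.distrib pderiv_superset[of ?S])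
  finally show ?thesis .
qed

lemma pderiv_zero[simp]: "pderiv_var j 0 = 0" by (simp add: pderiv_var_def)

lemma pderiv_uminus: "pderiv_var j (- f) = - pderiv_var j f"
  using pderiv_add[of j f "-f"] by (simp add: add_eq_0_iff)

lemma pderiv_diff: "pderiv_var j (f - g) = pderiv_var j f - pderiv_var j g"
  using pderiv_add[of j f "-g"] by (simp add: pderiv_uminus)

lemma pderiv_sum: "pderiv_var j (\<Sum>a\<in>A. F a) = (\<Sum>a\<in>A. pderiv_var j (F a))"
  by (induction A rule: infinite_finite_induct) (auto simp: pderiv_add)

lemma pderiv_single: "pderiv_var j (sg m c) = sg (m - sg j 1) (of_nat (lk m j) * c)"
  by (cases "c = 0") (simp_all add: pderiv_var_def)

lemma pderiv_polys: assumes "f \<in> polys n" shows "pderiv_var j f \<in> polys n"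
  unfolding pderiv_var_def
proof (rule polys_sum, rule polys_single)
  fix m assume "m \<in> ks f"
  with assms have "ks m \<subseteq> {..<n}" by (auto simp: polys_def)
  moreover have "ks (m - sg j 1) \<subseteq> ks m" by (auto simp: in_keys_iff lookup_minus)
  ultimately show "ks (m - sg j 1) \<subseteq> {..<n}" by blast
qed

lemma homog_pderiv: "homog q f \<Longrightarrow> homog (q - 1) (pderiv_var j f)"
  unfolding pderiv_var_def
proof (rule homog_sum)
  fix m assume h: "homog q f" and m: "m \<in> ks f"
  show "homog (q - 1) (sg (m - sg j 1) (of_nat (lk m j) * lk f m))"
  proof (cases "lk m j \<ge> 1")
    case True
    have hm: "mdeg m = mdeg (m - sg j 1) + 1"
      using mdeg_add[of "m - sg j 1" "sg j 1"] minus_single_add[OF True] by simp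
    then show ?thesis
      using h m by (auto simp: homog_def)
  next
    case False then have "lk m j = 0" by simp then show ?thesis by simp
  qed
qed

lemma peval_pderiv_single:
  "peval (pderiv_var j (sg m c)) x = of_nat (lk m j) * c * mon (m - sg j 1) x"
  by (simp add: pderiv_single peval_single)

lemma mon_minus_add:
  assumes "lk m j \<ge> 1"
  shows "mon (m + m' - sg j 1) x = mon (m - sg j 1) x * mon m' x"
proof -
  have "m + m' - sg j 1 = (m - sg j 1) + m'"
    by (rule poly_mapping_eqI) (use assms in \<open>auto simp: lookup_add lookup_minus lookup_single when_def\<close>)
  then show ?thesis by (simp add: mon_add)
qed

lemma pderiv_prod_single_single:
  "peval (pderiv_var j (sg m a * sg m' b)) x =
     peval (pderiv_var j (sg m a)) x * peval (sg m' b) x + peval (sg m a) x * peval (pderiv_var j (sg m' b)) x"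
proof -
  have A: "of_nat (lk m j) * mon (m + m' - sg j 1) x = of_nat (lk m j) * (mon (m - sg j 1) x * mon m' x)"
  proof (cases "lk m j \<ge> 1")
    case True then show ?thesis using mon_minus_add[OF True, of m' x] by simp
  next
    case False then have "lk m j = 0" by simp then show ?thesis by simp
  qed
  have B: "of_nat (lk m' j) * mon (m + m' - sg j 1) x = of_nat (lk m' j) * (mon m x * mon (m' - sg j 1) x)"
  proof (cases "lk m' j \<ge> 1")
    case True then show ?thesis using mon_minus_add[OF True, of m x] by (simp add: add.commute mult.commute)
  next
    case False then have "lk m' j = 0" by simp then show ?thesis by simp
  qed
  have "peval (pderiv_var j (sg m a * sg m' b)) x
     = a * b * (of_nat (lk m j) * mon (m + m' - sg j 1) x) + a * b * (of_nat (lk m' j) * mon (m + m' - sg j 1) x)"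
    by (simp add: mult_single peval_pderiv_single lookup_add algebra_simps)
  also have "\<dots> = peval (pderiv_var j (sg m a)) x * peval (sg m' b) x + peval (sg m a) x * peval (pderiv_var j (sg m' b)) x"
    unfolding A B by (simp add: peval_pderiv_single peval_single algebra_simps)
  finally show ?thesis .
qed

lemma pderiv_prod_single:
  "peval (pderiv_var j (sg m a * g)) x =
     peval (pderiv_var j (sg m a)) x * peval g x + peval (sg m a) x * peval (pderiv_var j g) x"
proof -
  have eq: "sg m a * g = (\<Sum>m'\<in>ks g. sg m a * sg m' (lk g m'))"
    by (subst poly_sum_singles[of g]) (simp add: sum_distrib_left)
  have g1: "peval g x = (\<Sum>m'\<in>ks g. peval (sg m' (lk g m')) x)"
    by (subst poly_sum_singles[of g]) (simp add: peval_sum)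
  have g2: "peval (pderiv_var j g) x = (\<Sum>m'\<in>ks g. peval (pderiv_var j (sg m' (lk g m'))) x)"
    by (subst poly_sum_singles[of g]) (simp add: peval_sum pderiv_sum)
  have "peval (pderiv_var j (sg m a * g)) x = (\<Sum>m'\<in>ks g. peval (pderiv_var j (sg m a * sg m' (lk g m'))) x)"
    by (simp only: eq pderiv_sum peval_sum)
  also have "\<dots> = (\<Sum>m'\<in>ks g. peval (pderiv_var j (sg m a)) x * peval (sg m' (lk g m')) x + peval (sg m a) x * peval (pderiv_var j (sg m' (lk g m'))) x)"
    by (simp only: pderiv_prod_single_single)
  also have "\<dots> = peval (pderiv_var j (sg m a)) x * (\<Sum>m'\<in>ks g. peval (sg m' (lk g m')) x) + peval (sg m a) x * (\<Sum>m'\<in>ks g. peval (pderiv_var j (sg m' (lk g m'))) x)"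
    by (simp only: sum.distrib sum_distrib_left)
  finally show ?thesis by (simp only: g1[symmetric] g2[symmetric])
qed



lemma pderiv_prod:
  "peval (pderiv_var j (f * g)) x =
     peval (pderiv_var j f) x * peval g x + peval f x * peval (pderiv_var j g) x"
proof -
  have eq: "f * g = (\<Sum>m\<in>ks f. sg m (lk f m) * g)"
    by (subst poly_sum_singles[of f]) (simp add: sum_distrib_right)
  have f1: "peval f x = (\<Sum>m\<in>ks f. peval (sg m (lk f m)) x)"
    by (subst poly_sum_singles[of f]) (simp add: peval_sum)
  have f2: "peval (pderiv_var j f) x = (\<Sum>m\<in>ks f. peval (pderiv_var j (sg m (lk f m))) x)"
    by (subst poly_sum_singles[of f]) (simp add: peval_sum pderiv_sum)
  have "peval (pderiv_var j (f * g)) x = (\<Sum>m\<in>ks f. peval (pderiv_var j (sg m (lk f m) * g)) x)"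
    by (simp only: eq pderiv_sum peval_sum)
  also have "\<dots> = (\<Sum>m\<in>ks f. peval (pderiv_var j (sg m (lk f m))) x * peval g x + peval (sg m (lk f m)) x * peval (pderiv_var j g) x)"
    by (simp only: pderiv_prod_single)
  also have "\<dots> = (\<Sum>m\<in>ks f. peval (pderiv_var j (sg m (lk f m))) x) * peval g x + (\<Sum>m\<in>ks f. peval (sg m (lk f m)) x) * peval (pderiv_var j g) x"
    by (simp only: sum.distrib sum_distrib_right)
  finally show ?thesis by (simp only: f1[symmetric] f2[symmetric])
qed


context
  fixes n r :: nat and P :: "nat \<Rightarrow> nat \<Rightarrow> 'k::field_char_0"
begin

abbreviation "II \<equiv> cone_ideal n r P"

lemma I_polys: "f \<in> II \<Longrightarrow> f \<in> polys n"
  by (simp add: cone_ideal_def)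

lemma I_eval: "f \<in> II \<Longrightarrow> i < r \<Longrightarrow> peval f (\<lambda>j. t * P i j) = 0"
  by (simp add: cone_ideal_def)

lemma I_eval1: "f \<in> II \<Longrightarrow> i < r \<Longrightarrow> peval f (P i) = 0"
  using I_eval[of f i 1] by simp

lemma I_iff: "f \<in> II \<longleftrightarrow> f \<in> polys n \<and> (\<forall>i<r. \<forall>t. peval f (\<lambda>j. t * P i j) = 0)"
  by (simp add: cone_ideal_def)

lemma I_zero[simp]: "0 \<in> II" by (simp add: I_iff)

lemma I_add: "f \<in> II \<Longrightarrow> g \<in> II \<Longrightarrow> f + g \<in> II"
  by (simp add: I_iff polys_add peval_add)

lemma I_diff: "f \<in> II \<Longrightarrow> g \<in> II \<Longrightarrow> f - g \<in> II"
  by (simp add: I_iff polys_diff peval_diff)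

lemma I_uminus: "f \<in> II \<Longrightarrow> - f \<in> II"
  by (simp add: I_iff polys_uminus peval_uminus)

lemma I_mult: "h \<in> polys n \<Longrightarrow> f \<in> II \<Longrightarrow> h * f \<in> II"
  by (simp add: I_iff polys_mult peval_mult)

lemma I_sum: "(\<And>a. a \<in> A \<Longrightarrow> F a \<in> II) \<Longrightarrow> (\<Sum>a\<in>A. F a) \<in> II"
  by (induction A rule: infinite_finite_induct) (auto simp: I_add)

lemma coeffs_zero:
  fixes a :: "nat \<Rightarrow> 'k"
  assumes "finite E" "\<And>t. (\<Sum>e\<in>E. t ^ e * a e) = 0" "e \<in> E"
  shows "a e = 0"
proof -
  define p where "p = (\<Sum>e\<in>E. monom (a e) e)"
  have "\<forall>t. poly p t = 0"
    using assms(2) by (simp add: p_def poly_sum poly_monom mult.commute)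
  then have "p = 0" using poly_all_0_iff_0 by blast
  then have "coeff p e = 0" by simp
  moreover have "coeff p e = a e"
    using assms(1,3) by (simp add: p_def coeff_sum coeff_monom sum.delta)
  ultimately show ?thesis by simp
qed

lemma I_hcomp:
  assumes f: "f \<in> II"
  shows "hcomp e f \<in> II"
proof -
  have "peval (hcomp e f) (P i) = 0" if i: "i < r" for i
  proof (cases "e \<in> mdeg ` ks f")
    case True
    show ?thesis
    proof (rule coeffs_zero[of "mdeg ` ks f" "\<lambda>e. peval (hcomp e f) (P i)"])
      fix t
      show "(\<Sum>e\<in>mdeg ` ks f. t ^ e * peval (hcomp e f) (P i)) = 0"
        using I_eval[OF f i, of t] peval_scale_hcomp[of f t "P i"] by simp
    qed (use True in auto)
  next
    case False
    then have "hcomp e f = 0"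
      by (intro poly_mapping_eqI) (auto simp: lookup_hcomp in_keys_iff)
    then show ?thesis by simp
  qed
  then show ?thesis
    using f by (simp add: I_iff hcomp_polys homog_scale[OF homog_hcomp])
qed

lemma gh_polys: "graded_hom n II l \<phi> \<Longrightarrow> f \<in> II \<Longrightarrow> \<phi> f \<in> polys n"
  by (simp add: graded_hom_def)
lemma gh_add: "graded_hom n II l \<phi> \<Longrightarrow> f \<in> II \<Longrightarrow> g \<in> II \<Longrightarrow> \<phi> (f + g) - (\<phi> f + \<phi> g) \<in> II"
  by (simp add: graded_hom_def)
lemma gh_mult: "graded_hom n II l \<phi> \<Longrightarrow> h \<in> polys n \<Longrightarrow> f \<in> II \<Longrightarrow> \<phi> (h * f) - h * \<phi> f \<in> II"
  by (simp add: graded_hom_def)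
lemma gh_homog: "graded_hom n II l \<phi> \<Longrightarrow> f \<in> II \<Longrightarrow> homog q f \<Longrightarrow> \<exists>g\<in>polys n. homog (q + l) g \<and> \<phi> f - g \<in> II"
  by (simp add: graded_hom_def)

lemma gh_zero: assumes "graded_hom n II l \<phi>" shows "\<phi> 0 \<in> II"
proof -
  have "\<phi> (0 + 0) - (\<phi> 0 + \<phi> 0) \<in> II" by (rule gh_add[OF assms]) simp_all
  then have "- \<phi> 0 \<in> II" by simp
  then show ?thesis using I_uminus by fastforce
qed

lemma gh_sum:
  assumes "graded_hom n II l \<phi>" "finite A" "\<And>a. a \<in> A \<Longrightarrow> F a \<in> II"
  shows "\<phi> (\<Sum>a\<in>A. F a) - (\<Sum>a\<in>A. \<phi> (F a)) \<in> II"
  using assms(2,3)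
proof (induction A rule: finite_induct)
  case empty then show ?case using gh_zero[OF assms(1)] by simp
next
  case (insert x A)
  have S: "(\<Sum>a\<in>A. F a) \<in> II" using insert by (auto intro: I_sum)
  have 1: "\<phi> (F x + (\<Sum>a\<in>A. F a)) - (\<phi> (F x) + \<phi> (\<Sum>a\<in>A. F a)) \<in> II"
    using gh_add[OF assms(1)] S insert by auto
  have 2: "\<phi> (\<Sum>a\<in>A. F a) - (\<Sum>a\<in>A. \<phi> (F a)) \<in> II" using insert by auto
  have "\<phi> (\<Sum>a\<in>insert x A. F a) - (\<Sum>a\<in>insert x A. \<phi> (F a)) =
     (\<phi> (F x + (\<Sum>a\<in>A. F a)) - (\<phi> (F x) + \<phi> (\<Sum>a\<in>A. F a))) + (\<phi> (\<Sum>a\<in>A. F a) - (\<Sum>a\<in>A. \<phi> (F a)))"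
    using insert by simp
  then show ?case using I_add[OF 1 2] by simp
qed

end




lemma mon_single_Suc0[simp]: "mon (sg j (Suc 0)) x = x j"
  using mon_single1[of j x] by simp

definition lform :: "(nat \<Rightarrow> 'k::comm_ring_1) \<Rightarrow> nat \<Rightarrow> nat \<Rightarrow> 'k mpoly" where
  "lform Q z k = sg (sg k 1) (Q z) - sg (sg z 1) (Q k)"

lemma lform_polys: "k < n \<Longrightarrow> z < n \<Longrightarrow> lform Q z k \<in> polys n"
  unfolding lform_def by (intro polys_diff polys_single) auto

lemma peval_lform: "peval (lform Q z k) x = Q z * x k - Q k * x z"
  by (simp add: lform_def peval_diff peval_single)

lemma lform_j0[simp]: "lform Q z z = 0"
  by (simp add: lform_def)

lemma peval_pderiv_lform:
  "peval (pderiv_var j (lform Q z k)) x = (if j = k then Q z else 0) - (if j = z then Q k else 0)"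
  by (simp add: lform_def pderiv_diff peval_diff pderiv_single peval_single lookup_single when_def)

lemma mdeg_zero_iff: "mdeg m = 0 \<longleftrightarrow> m = 0"
proof
  assume "mdeg m = 0"
  then have "\<forall>j\<in>ks m. lk m j = 0" by (simp add: mdeg_def)
  then have "ks m = {}" by (metis equals0I in_keys_iff)
  then show "m = 0" by (simp only: keys_eq_empty)
qed simp

lemma mono_decomp:
  fixes Q :: "nat \<Rightarrow> 'k::field"
  assumes Q: "Q z \<noteq> 0" and z: "z < n"
  shows "ks m \<subseteq> {..<n} \<Longrightarrow> \<exists>b. (\<forall>k<n. b k \<in> polys n) \<and>
     sg m c = sg (sg z (mdeg m)) (c * mon m Q / Q z ^ mdeg m) + (\<Sum>k<n. b k * lform Q z k)"
proof (induction "mdeg m" arbitrary: m c)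
  case 0
  then have "m = 0" using mdeg_zero_iff by metis
  then show ?case by (intro exI[of _ "\<lambda>_. 0"]) simp
next
  case (Suc d)
  then have "m \<noteq> 0" by auto
  then obtain k where k: "k \<in> ks m" by (metis keys_eq_empty ex_in_conv)
  then have k1: "lk m k \<ge> 1" by (simp add: in_keys_iff)
  have kn: "k < n" using k Suc.prems by auto
  define m' where "m' = m - sg k 1"
  have dm': "d = mdeg m'" using mdeg_minus_single[OF k1] Suc.hyps by (simp add: m'_def)
  have "ks m' \<subseteq> ks m" by (auto simp: m'_def in_keys_iff lookup_minus)
  then have km': "ks m' \<subseteq> {..<n}" using Suc.prems by blast
  define \<alpha> where "\<alpha> = c * mon m' Q / Q z ^ d"
  obtain b' where b': "\<forall>k<n. b' k \<in> polys n"
    and eq': "sg m' c = sg (sg z d) \<alpha> + (\<Sum>k<n. b' k * lform Q z k)"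
    using Suc.hyps(1)[OF dm' km', of c] dm' by (auto simp: \<alpha>_def)
  have m_eq: "sg k 1 + m' = m" using minus_single_add[OF k1] by (simp add: m'_def add.commute)
  have 1: "sg m c = sg (sg k 1) 1 * sg m' c"
    using mult_single[of "sg k 1" 1 m' c] m_eq by simp
  have key: "sg (sg k 1) 1 * sg (sg z d) \<alpha> = sg (sg z d) (\<alpha> / Q z) * lform Q z k + sg (sg z (Suc d)) (\<alpha> * Q k / Q z)"
  proof -
    have a: "sg z d + sg z (Suc 0) = sg z (Suc d)" by (simp add: single_add[symmetric])
    have "sg (sg z d) (\<alpha> / Q z) * lform Q z k
        = sg (sg z d + sg k 1) (\<alpha> / Q z * Q z) - sg (sg z d + sg z 1) (\<alpha> / Q z * Q k)"
      by (simp add: lform_def right_diff_distrib mult_single)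
    also have "\<dots> = sg (sg k 1 + sg z d) \<alpha> - sg (sg z (Suc d)) (\<alpha> * Q k / Q z)"
      using Q by (simp add: a add.commute)
    finally show ?thesis by (simp add: mult_single)
  qed
  define b where "b k' = sg (sg k 1) 1 * b' k' + (if k' = k then sg (sg z d) (\<alpha> / Q z) else 0)" for k'
  have bp: "\<forall>k'<n. b k' \<in> polys n"
    using b' z kn by (auto simp: b_def split: if_splits intro!: polys_add polys_mult polys_single)
  have sumb: "(\<Sum>k'<n. b k' * lform Q z k') = sg (sg k 1) 1 * (\<Sum>k'<n. b' k' * lform Q z k') + sg (sg z d) (\<alpha> / Q z) * lform Q z k"
    using kn by (simp add: b_def distrib_right sum.distrib sum_distrib_left mult.assoc if_distrib[of "\<lambda>x. x * _"] sum.delta cong: if_cong)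
  have coef: "\<alpha> * Q k / Q z = c * mon m Q / Q z ^ Suc d"
    using Q mon_minus_single[OF k1, of Q] by (simp add: \<alpha>_def m'_def field_simps)
  have fin: "sg m c = sg (sg z (Suc d)) (c * mon m Q / Q z ^ Suc d) + (\<Sum>k'<n. b k' * lform Q z k')"
    unfolding 1 eq' distrib_left key sumb coef by (simp add: algebra_simps)
  show ?case using bp fin by (intro exI[of _ b]) (simp add: Suc.hyps(2)[symmetric])
qed

lemma homog_decomp:
  fixes Q :: "nat \<Rightarrow> 'k::field"
  assumes Q: "Q z \<noteq> 0" and z: "z < n" and f: "f \<in> polys n" "homog q f"
  shows "\<exists>b. (\<forall>k<n. b k \<in> polys n) \<and> f = sg (sg z (nat q)) (peval f Q / Q z ^ nat q) + (\<Sum>k<n. b k * lform Q z k)"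
proof -
  have "\<exists>b. (\<forall>k<n. b k \<in> polys n) \<and> (\<Sum>m\<in>S. sg m (lk f m)) =
      sg (sg z (nat q)) (\<Sum>m\<in>S. lk f m * mon m Q / Q z ^ nat q) + (\<Sum>k<n. b k * lform Q z k)"
    if "S \<subseteq> ks f" for S
  proof -
    have "finite S" by (rule finite_subset[OF that]) simp
    then show ?thesis using that
    proof (induction rule: finite_subset_induct)
      case empty then show ?case by (intro exI[of _ "\<lambda>_. 0"]) simp
    next
      case (insert a F)
      then obtain b where b: "\<forall>k<n. b k \<in> polys n" and eqF: "(\<Sum>m\<in>F. sg m (lk f m)) =
          sg (sg z (nat q)) (\<Sum>m\<in>F. lk f m * mon m Q / Q z ^ nat q) + (\<Sum>k<n. b k * lform Q z k)"
        by blast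
      have ka: "ks a \<subseteq> {..<n}" using f insert by (auto simp: polys_def)
      have da: "mdeg a = nat q" using f insert by (auto simp: homog_def)
      obtain c where c: "\<forall>k<n. c k \<in> polys n" and eqa: "sg a (lk f a) =
          sg (sg z (nat q)) (lk f a * mon a Q / Q z ^ nat q) + (\<Sum>k<n. c k * lform Q z k)"
        using mono_decomp[where Q=Q and z=z and n=n and m=a and c="lk f a", OF Q z ka] da by auto
      show ?case
        apply (intro exI[of _ "\<lambda>k. c k + b k"])
        using b c insert
        by (auto simp: polys_add eqF eqa single_add distrib_right sum.distrib)
    qed
  qed
  from this[OF order_refl] obtain b where b: "\<forall>k<n. b k \<in> polys n" and
    eq: "(\<Sum>m\<in>ks f. sg m (lk f m)) = sg (sg z (nat q)) (\<Sum>m\<in>ks f. lk f m * mon m Q / Q z ^ nat q) + (\<Sum>k<n. b k * lform Q z k)"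
    by blast
  have pv: "(\<Sum>m\<in>ks f. lk f m * mon m Q / Q z ^ nat q) = peval f Q / Q z ^ nat q"
    by (simp add: peval_mon sum_divide_distrib)
  from poly_sum_singles[of f] eq have "f = sg (sg z (nat q)) (\<Sum>m\<in>ks f. lk f m * mon m Q / Q z ^ nat q) + (\<Sum>k<n. b k * lform Q z k)"
    by (rule trans)
  then have "f = sg (sg z (nat q)) (peval f Q / Q z ^ nat q) + (\<Sum>k<n. b k * lform Q z k)"
    unfolding pv .
  with b show ?thesis by blast
qed

lemma sep_form:
  fixes P :: "nat \<Rightarrow> nat \<Rightarrow> 'k::field"
  assumes proj: "proj_points n r P" and i: "i < r" "i' < r" "i \<noteq> i'"
  shows "\<exists>L\<in>polys n. peval L (P i) \<noteq> 0 \<and> (\<forall>t. peval L (\<lambda>j. t * P i' j) = 0)"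
proof -
  obtain a where a: "a < n" "P i' a \<noteq> 0" using proj i by (auto simp: proj_points_def)
  have "\<forall>c. \<exists>j<n. P i j \<noteq> c * P i' j" using proj i by (auto simp: proj_points_def)
  then obtain b where b: "b < n" "P i b \<noteq> P i a / P i' a * P i' b"
    by blast
  define L :: "'k mpoly" where "L = sg (sg b 1) (P i' a) - sg (sg a 1) (P i' b)"
  have pe: "peval L x = P i' a * x b - P i' b * x a" for x
    by (simp add: L_def peval_diff peval_single)
  have "peval L (P i) \<noteq> 0"
  proof
    assume "peval L (P i) = 0"
    then have "P i b * P i' a = P i a * P i' b" unfolding pe by (simp add: algebra_simps)
    then have "P i b = P i a / P i' a * P i' b" using a by (simp add: field_simps)
    then show False using b by simp
  qed
  moreover have "L \<in> polys n" unfolding L_def using a b by (intro polys_diff polys_single) auto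
  moreover have "peval L (\<lambda>j. t * P i' j) = 0" for t unfolding pe by (simp add: algebra_simps)
  ultimately show ?thesis by blast
qed

lemma sep_prod:
  fixes P :: "nat \<Rightarrow> nat \<Rightarrow> 'k::field"
  assumes proj: "proj_points n r P" and i: "i < r"
  shows "\<exists>u\<in>polys n. peval u (P i) \<noteq> 0 \<and> (\<forall>i'<r. i' \<noteq> i \<longrightarrow> (\<forall>t. peval u (\<lambda>j. t * P i' j) = 0))"
proof -
  have "\<forall>i'\<in>{..<r}-{i}. \<exists>L. L \<in> polys n \<and> peval L (P i) \<noteq> 0 \<and> (\<forall>t. peval L (\<lambda>j. t * P i' j) = 0)"
    using sep_form[OF proj i] by auto
  then obtain L where L: "\<forall>i'\<in>{..<r}-{i}. L i' \<in> polys n \<and> peval (L i') (P i) \<noteq> 0 \<and> (\<forall>t. peval (L i') (\<lambda>j. t * P i' j) = 0)"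
    by metis
  define u where "u = (\<Prod>i'\<in>{..<r}-{i}. L i')"
  have "u \<in> polys n" unfolding u_def using L by (intro polys_prod) auto
  moreover have "peval u (P i) \<noteq> 0" unfolding u_def peval_prod using L by (simp add: prod_zero_iff)
  moreover have "peval u (\<lambda>j. t * P i' j) = 0" if "i' < r" "i' \<noteq> i" for i' t
    unfolding u_def peval_prod using L that by (intro prod_zero) auto
  ultimately show ?thesis by blast
qed




lemma key_lemma:
  fixes P :: "nat \<Rightarrow> nat \<Rightarrow> 'k::field_char_0"
  assumes proj: "proj_points n r P" and i: "i < r" and gh: "graded_hom n (cone_ideal n r P) l \<phi>"
  shows "\<exists>v. \<forall>f\<in>cone_ideal n r P. (\<exists>q. homog q f) \<longrightarrow>
           peval (\<phi> f) (P i) = (\<Sum>j<n. v j * peval (pderiv_var j f) (P i))"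
proof -
  let ?I = "cone_ideal n r P"
  obtain z where z: "z < n" "P i z \<noteq> 0" using proj i by (auto simp: proj_points_def)
  obtain u where u: "u \<in> polys n" and uP: "peval u (P i) \<noteq> 0"
    and u0: "\<forall>i'<r. i' \<noteq> i \<longrightarrow> (\<forall>t. peval u (\<lambda>j. t * P i' j) = 0)"
    using sep_prod[OF proj i] by blast
  define p where "p = P i z"
  have p: "p \<noteq> 0" using z by (simp add: p_def)
  define w where "w k = u * lform (P i) z k" for k
  have wI: "w k \<in> ?I" if k: "k < n" for k
  proof -
    have "peval (w k) (\<lambda>j. t * P i' j) = 0" if "i' < r" for i' t
    proof (cases "i' = i")
      case True
      then show ?thesis by (simp add: w_def peval_mult peval_lform algebra_simps)
    next
      case False
      then show ?thesis using u0 that by (simp add: w_def peval_mult)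
    qed
    moreover have "w k \<in> polys n" using u k z by (simp add: w_def polys_mult lform_polys)
    ultimately show ?thesis by (simp add: I_iff)
  qed
  define \<gamma> where "\<gamma> k = peval (\<phi> (w k)) (P i)" for k
  have \<gamma>z: "\<gamma> z = 0"
    using I_eval1[OF gh_zero[OF gh] i] by (simp add: \<gamma>_def w_def)
  define v where "v j = (if j = z then 0 else \<gamma> j / (peval u (P i) * p))" for j
  have d2: "(\<Sum>j<n. v j * peval (pderiv_var j (lform (P i) z k)) (P i)) = \<gamma> k / peval u (P i)"
    if k: "k < n" for k
  proof -
    have "(\<Sum>j<n. v j * peval (pderiv_var j (lform (P i) z k)) (P i))
        = (\<Sum>j<n. (if j = k then v j * p else 0) - (if j = z then v j * P i k else 0))"
      by (rule sum.cong) (auto simp: peval_pderiv_lform p_def right_diff_distrib)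
    also have "\<dots> = v k * p - v z * P i k"
      using k z by (simp add: sum_subtractf sum.delta)
    also have "\<dots> = \<gamma> k / peval u (P i)"
      using p \<gamma>z by (cases "k = z") (simp_all add: v_def field_simps)
    finally show ?thesis .
  qed
  show ?thesis
  proof (intro exI ballI impI)
    fix f assume f: "f \<in> ?I" and "\<exists>q. homog q f"
    then obtain q where q: "homog q f" by blast
    have fP: "peval f (P i) = 0" using I_eval1[OF f i] .
    obtain b where b: "\<forall>k<n. b k \<in> polys n"
      and fe0: "f = sg (sg z (nat q)) (peval f (P i) / P i z ^ nat q) + (\<Sum>k<n. b k * lform (P i) z k)"
      using homog_decomp[where Q = "P i" and z = z and n = n and f = f and q = q, OF z(2) z(1) I_polys[OF f] q]
      by blast
    have fe: "f = (\<Sum>k<n. b k * lform (P i) z k)" using fe0 unfolding fP by simp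
    have uf: "u * f = (\<Sum>k<n. b k * w k)"
      by (subst fe) (simp add: w_def sum_distrib_left mult.left_commute)
    have e1: "peval (\<phi> (u * f)) (P i) = peval u (P i) * peval (\<phi> f) (P i)"
      using I_eval1[OF gh_mult[OF gh u f] i] by (simp add: peval_diff peval_mult)
    have bwI: "b k * w k \<in> ?I" if "k \<in> {..<n}" for k
      using that b wI by (auto intro: I_mult)
    have e2: "peval (\<phi> (\<Sum>k<n. b k * w k)) (P i) = (\<Sum>k<n. peval (\<phi> (b k * w k)) (P i))"
      using I_eval1[OF gh_sum[where A="{..<n}" and F="\<lambda>k. b k * w k", OF gh finite_lessThan bwI] i] by (simp add: peval_diff peval_sum)
    have e3: "peval (\<phi> (b k * w k)) (P i) = peval (b k) (P i) * \<gamma> k" if "k < n" for k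
      using I_eval1[OF gh_mult[OF gh _ wI] i] b that by (simp add: peval_diff peval_mult \<gamma>_def)
    have main: "peval u (P i) * peval (\<phi> f) (P i) = (\<Sum>k<n. peval (b k) (P i) * \<gamma> k)"
      using e1 e2 e3 uf by simp
    have d1: "peval (pderiv_var j f) (P i) = (\<Sum>k<n. peval (b k) (P i) * peval (pderiv_var j (lform (P i) z k)) (P i))" for j
    proof -
      have "peval (pderiv_var j f) (P i) = (\<Sum>k<n. peval (pderiv_var j (b k * lform (P i) z k)) (P i))"
        using fe by (simp add: pderiv_sum peval_sum)
      also have "\<dots> = (\<Sum>k<n. peval (b k) (P i) * peval (pderiv_var j (lform (P i) z k)) (P i))"
        by (rule sum.cong) (simp_all add: pderiv_prod peval_lform)
      finally show ?thesis .
    qed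
    define B where "B k = peval (b k) (P i)" for k
    define D where "D j k = peval (pderiv_var j (lform (P i) z k)) (P i)" for j k
    have "(\<Sum>j<n. v j * peval (pderiv_var j f) (P i)) = (\<Sum>j<n. v j * (\<Sum>k<n. B k * D j k))"
      unfolding d1 B_def D_def ..
    also have "\<dots> = (\<Sum>j<n. \<Sum>k<n. B k * (v j * D j k))"
      by (simp add: sum_distrib_left mult.left_commute)
    also have "\<dots> = (\<Sum>k<n. \<Sum>j<n. B k * (v j * D j k))"
      by (rule sum.swap)
    also have "\<dots> = (\<Sum>k<n. peval (b k) (P i) * (\<Sum>j<n. v j * peval (pderiv_var j (lform (P i) z k)) (P i)))"
      by (simp add: sum_distrib_left B_def D_def)
    also have "\<dots> = (\<Sum>k<n. peval (b k) (P i) * \<gamma> k) / peval u (P i)"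
      by (simp add: d2 sum_divide_distrib)
    also have "\<dots> = peval (\<phi> f) (P i)"
      using main uP by (simp add: field_simps)
    finally show "peval (\<phi> f) (P i) = (\<Sum>j<n. v j * peval (pderiv_var j f) (P i))" by simp
  qed
qed




lemma part1:
  fixes P :: "nat \<Rightarrow> nat \<Rightarrow> 'k::field_char_0"
  assumes proj: "proj_points n r P" and KO: "K_deg r (l + 1) = O_deg n r P (l + 1)"
  shows "T1_vanishes n (cone_ideal n r P) l"
  unfolding T1_vanishes_def
proof (intro allI impI)
  let ?I = "cone_ideal n r P"
  fix \<phi> assume gh: "graded_hom n ?I l \<phi>"
  have "\<forall>i\<in>{..<r}. \<exists>v. \<forall>f\<in>?I. (\<exists>q. homog q f) \<longrightarrow> peval (\<phi> f) (P i) = (\<Sum>j<n. v j * peval (pderiv_var j f) (P i))"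
    using key_lemma[OF proj _ gh] by blast
  from bchoice[OF this] obtain V where V0: "\<forall>i\<in>{..<r}. \<forall>f\<in>?I. (\<exists>q. homog q f) \<longrightarrow>
      peval (\<phi> f) (P i) = (\<Sum>j<n. V i j * peval (pderiv_var j f) (P i))"
    by blast
  have V: "\<And>i f. i < r \<Longrightarrow> f \<in> ?I \<Longrightarrow> (\<exists>q. homog q f) \<Longrightarrow>
      peval (\<phi> f) (P i) = (\<Sum>j<n. V i j * peval (pderiv_var j f) (P i))"
    using V0 by blast
  have "\<forall>j\<in>{..<n}. \<exists>F. F \<in> polys n \<and> embK r P F = (\<lambda>i e. if i < r \<and> e = l + 1 then V i j else 0)"
  proof
    fix j
    have "(\<lambda>i e. if i < r \<and> e = l + 1 then V i j else 0) \<in> K_deg r (l + 1)" by (simp add: K_deg_def)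
    then have "(\<lambda>i e. if i < r \<and> e = l + 1 then V i j else 0) \<in> O_deg n r P (l + 1)" using KO by simp
    then show "\<exists>F. F \<in> polys n \<and> embK r P F = (\<lambda>i e. if i < r \<and> e = l + 1 then V i j else 0)"
      by (auto simp: O_deg_def)
  qed
  from bchoice[OF this] obtain F where F0: "\<forall>j\<in>{..<n}. F j \<in> polys n \<and> embK r P (F j) = (\<lambda>i e. if i < r \<and> e = l + 1 then V i j else 0)"
    by blast
  have F: "\<And>j. j < n \<Longrightarrow> F j \<in> polys n"
    "\<And>j. j < n \<Longrightarrow> embK r P (F j) = (\<lambda>i e. if i < r \<and> e = l + 1 then V i j else 0)"
    using F0 by auto
  define a where "a j = (if 0 \<le> l + 1 then hcomp (nat (l + 1)) (F j) else 0)" for j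
  have a_polys: "a j \<in> polys n" if "j < n" for j
    using F(1)[OF that] by (simp add: a_def hcomp_polys)
  have a_homog: "homog (l + 1) (a j)" for j
    using homog_hcomp[of "nat (l + 1)" "F j"] by (auto simp: a_def)
  have aP: "peval (a j) (P i) = V i j" if "j < n" "i < r" for i j
  proof -
    have "embK r P (F j) i (l + 1) = V i j" using F(2)[OF that(1)] that(2) by simp
    then show ?thesis using that(2) by (auto simp: embK_def a_def split: if_splits)
  qed
  show "derivation_hom n ?I l \<phi>"
    unfolding derivation_hom_def
  proof (intro exI[of _ a] conjI allI impI ballI)
    fix j assume "j < n" then show "a j \<in> polys n" by (rule a_polys)
  next
    fix j show "homog (l + 1) (a j)" by (rule a_homog)
  next
    fix f assume f: "f \<in> ?I"
    define E where "E = mdeg ` ks f"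
    have finE: "finite E" by (simp add: E_def)
    have fE: "(\<Sum>e\<in>E. hcomp e f) = f" by (rule sum_hcomp) (simp_all add: E_def)
    have fEI: "hcomp e f \<in> ?I" for e using I_hcomp[OF f] .
    have "\<forall>e\<in>E. \<exists>g. g \<in> polys n \<and> homog (int e + l) g \<and> \<phi> (hcomp e f) - g \<in> ?I"
      using gh_homog[OF gh fEI homog_hcomp] by blast
    from bchoice[OF this] obtain G where G0: "\<forall>e\<in>E. G e \<in> polys n \<and> homog (int e + l) (G e) \<and> \<phi> (hcomp e f) - G e \<in> ?I"
      by blast
    have G: "\<And>e. e \<in> E \<Longrightarrow> G e \<in> polys n"
      "\<And>e. e \<in> E \<Longrightarrow> homog (int e + l) (G e)"
      "\<And>e. e \<in> E \<Longrightarrow> \<phi> (hcomp e f) - G e \<in> ?I"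
      using G0 by auto
    have H: "G e - (\<Sum>j<n. a j * pderiv_var j (hcomp e f)) \<in> ?I" if e: "e \<in> E" for e
    proof -
      let ?fe = "hcomp e f"
      have GP: "peval (G e) (P i) = (\<Sum>j<n. V i j * peval (pderiv_var j ?fe) (P i))" if i: "i < r" for i
      proof -
        have "peval (G e) (P i) = peval (\<phi> ?fe) (P i)"
          using I_eval1[OF G(3)[OF e] i] by (simp add: peval_diff)
        also have "\<dots> = (\<Sum>j<n. V i j * peval (pderiv_var j ?fe) (P i))"
          using V[OF i fEI] homog_hcomp by blast
        finally show ?thesis .
      qed
      have "peval (G e - (\<Sum>j<n. a j * pderiv_var j ?fe)) (\<lambda>j. t * P i j) = 0" if i: "i < r" for i t
      proof -
        have hG: "peval (G e) (\<lambda>j. t * P i j) = t ^ nat (int e + l) * peval (G e) (P i)"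
          by (rule homog_scale[OF G(2)[OF e]])
        have ha: "peval (a j) (\<lambda>j. t * P i j) = t ^ nat (l + 1) * V i j" if "j < n" for j
          using homog_scale[OF a_homog[of j]] aP[OF that i] by simp
        have hd: "peval (pderiv_var j ?fe) (\<lambda>j. t * P i j) = t ^ nat (int e - 1) * peval (pderiv_var j ?fe) (P i)" for j
          by (rule homog_scale[OF homog_pderiv[OF homog_hcomp]])
        have lhs: "peval (G e - (\<Sum>j<n. a j * pderiv_var j ?fe)) (\<lambda>j. t * P i j)
            = t ^ nat (int e + l) * peval (G e) (P i) - (\<Sum>j<n. t ^ nat (l + 1) * V i j * (t ^ nat (int e - 1) * peval (pderiv_var j ?fe) (P i)))"
          by (simp add: peval_diff peval_sum peval_mult hG ha hd)
        show ?thesis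
        proof (cases "l + 1 < 0")
          case True
          then have "V i j = 0" if "j < n" for j using aP[OF that i] by (simp add: a_def)
          then show ?thesis unfolding lhs GP[OF i] by simp
        next
          case False
          show ?thesis
          proof (cases "e = 0")
            case True
            then have "pderiv_var j ?fe = 0" for j
              using homog_neg[OF _ homog_pderiv[OF homog_hcomp[of e f]]] by simp
            then show ?thesis unfolding lhs GP[OF i] by simp
          next
            case e0: False
            have ex: "nat (int e + l) = nat (l + 1) + nat (int e - 1)" using False e0 by simp
            show ?thesis unfolding lhs GP[OF i] ex
              by (simp add: power_add sum_distrib_left algebra_simps)
          qed
        qed
      qed
      moreover have "G e - (\<Sum>j<n. a j * pderiv_var j ?fe) \<in> polys n"
        using G(1)[OF e] a_polys
        by (intro polys_diff polys_sum polys_mult pderiv_polys hcomp_polys I_polys[OF f]) auto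
      ultimately show ?thesis by (simp add: I_iff)
    qed
    have S1: "\<phi> f - (\<Sum>e\<in>E. \<phi> (hcomp e f)) \<in> ?I"
      using gh_sum[where A=E and F="\<lambda>e. hcomp e f", OF gh finE fEI] fE by simp
    have S2: "(\<Sum>e\<in>E. \<phi> (hcomp e f) - G e) \<in> ?I"
      using G(3) by (rule I_sum)
    have S3: "(\<Sum>e\<in>E. G e - (\<Sum>j<n. a j * pderiv_var j (hcomp e f))) \<in> ?I"
      using H by (rule I_sum)
    have pd: "pderiv_var j f = (\<Sum>e\<in>E. pderiv_var j (hcomp e f))" for j
    proof -
      have "pderiv_var j f = pderiv_var j (\<Sum>e\<in>E. hcomp e f)" using fE by simp
      then show ?thesis by (simp add: pderiv_sum)
    qed
    have sw: "(\<Sum>j<n. a j * pderiv_var j f) = (\<Sum>e\<in>E. \<Sum>j<n. a j * pderiv_var j (hcomp e f))"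
      unfolding pd sum_distrib_left by (rule sum.swap)
    have eq: "\<phi> f - (\<Sum>j<n. a j * pderiv_var j f) =
        (\<phi> f - (\<Sum>e\<in>E. \<phi> (hcomp e f))) + (\<Sum>e\<in>E. \<phi> (hcomp e f) - G e) + (\<Sum>e\<in>E. G e - (\<Sum>j<n. a j * pderiv_var j (hcomp e f)))"
      unfolding sw by (simp add: sum_subtractf)
    show "\<phi> f - (\<Sum>j<n. a j * pderiv_var j f) \<in> ?I"
      unfolding eq by (rule I_add[OF I_add[OF S1 S2] S3])
  qed
qed




lemma sum_fun_apply: "(\<Sum>a\<in>A. f a) x = (\<Sum>a\<in>A. f a x)"
  by (induction A rule: infinite_finite_induct) (auto simp: plus_fun_def)

lemma full_dim:
  fixes E :: "(nat \<Rightarrow> 'k::field) set"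
  assumes dimE: "vector_space.dim (\<lambda>c (v :: nat \<Rightarrow> 'k). (\<lambda>i. c * v i)) E = r"
    and EW: "\<And>v. v \<in> E \<Longrightarrow> \<forall>i\<ge>r. v i = 0"
    and E0: "0 \<in> E" and Eadd: "\<And>x y. x \<in> E \<Longrightarrow> y \<in> E \<Longrightarrow> x + y \<in> E"
    and Escale: "\<And>c x. x \<in> E \<Longrightarrow> (\<lambda>i. c * x i) \<in> E"
    and w: "\<forall>i\<ge>r. w i = 0"
  shows "w \<in> E"
proof -
  interpret V: vector_space "\<lambda>c (v :: nat \<Rightarrow> 'k). (\<lambda>i. c * v i)"
    by unfold_locales (auto simp: algebra_simps)
  have sub: "V.subspace E" unfolding V.subspace_def using E0 Eadd Escale by blast
  obtain B where B: "B \<subseteq> E" "V.independent B" "E \<subseteq> V.span B" "card B = V.dim E"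
    using V.basis_exists by blast
  define U where "U = (\<lambda>i. (\<lambda>j. if j = i then (1::'k) else 0)) ` {..<r}"
  have finU: "finite U" and cardU: "card U \<le> r" unfolding U_def
    by (auto intro: card_image_le[THEN order_trans])
  have WU: "v \<in> V.span U" if v: "\<forall>i\<ge>r. v i = 0" for v
  proof -
    have "v = (\<Sum>i<r. (\<lambda>j. v i * (if j = i then 1 else 0)))"
    proof (rule ext)
      fix x
      have "(\<Sum>i<r. (\<lambda>j. v i * (if j = i then 1 else 0))) x = (\<Sum>i<r. if x = i then v i else 0)"
        unfolding sum_fun_apply by (rule sum.cong) auto
      also have "\<dots> = v x" using v by (auto simp: sum.delta not_less)
      finally show "v x = (\<Sum>i<r. (\<lambda>j. v i * (if j = i then 1 else 0))) x" by simp
    qed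
    also have "\<dots> \<in> V.span U"
      by (intro V.span_sum V.span_scale V.span_base) (auto simp: U_def)
    finally show ?thesis .
  qed
  show "w \<in> E"
  proof (rule ccontr)
    assume wE: "w \<notin> E"
    have "V.span B \<subseteq> E" using V.span_minimal[OF B(1) sub] .
    then have "w \<notin> V.span B" using wE by blast
    then have ind: "V.independent (insert w B)" using V.independent_insertI B(2) by blast
    have "insert w B \<subseteq> V.span U" using WU w B(1) EW by blast
    from V.independent_span_bound[OF finU ind this]
    have "finite (insert w B)" "card (insert w B) \<le> card U" by auto
    moreover have "w \<notin> B" using wE B(1) by blast
    ultimately have "card B + 1 \<le> r" using cardU by auto
    then show False using B(4) dimE by simp
  qed
qed

lemma choose_mono_deg:
  assumes "n \<ge> 1" "d \<le> L"
  shows "(n + d - 1) choose d \<le> (n + L - 1) choose L"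
  using assms(2)
proof (induction L rule: dec_induct)
  case base then show ?case by simp
next
  case (step L)
  have "n + Suc L - 1 = Suc (n + L - 1)" using assms(1) by simp
  then have "(n + Suc L - 1) choose Suc L = ((n + L - 1) choose L) + ((n + L - 1) choose Suc L)"
    by (simp only: binomial_Suc_Suc)
  then show ?case using step by simp
qed

lemma surj_eval:
  fixes P :: "nat \<Rightarrow> nat \<Rightarrow> 'k::field_char_0"
  assumes n: "n \<ge> 1" and gp: "general_position n r P" and hi: "r \<le> (n + d - 1) choose d" and L: "d \<le> L"
  shows "\<exists>F\<in>polys n. homog (int L) F \<and> (\<forall>i<r. peval F (P i) = w i)"
proof (cases "L = 0")
  case True
  then have "d = 0" using L by simp
  then have r1: "r \<le> 1" using hi by simp
  have "\<forall>i<r. peval (sg 0 (w 0)) (P i) = w i"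
  proof (intro allI impI)
    fix i assume "i < r" then have "i = 0" using r1 by simp
    then show "peval (sg 0 (w 0)) (P i) = w i" by (simp add: peval_single)
  qed
  moreover have "homog (int L) (sg 0 (w 0))" using True homog_single[of 0 "w 0"] by simp
  moreover have "sg 0 (w 0) \<in> polys n" by (rule polys_single) simp
  ultimately show ?thesis by blast
next
  case False
  let ?E = "eval_vectors n r P L"
  have "conditions_imposed n r P L = min r ((n + L - 1) choose L)"
    using gp False by (simp add: general_position_def)
  moreover have "r \<le> (n + L - 1) choose L" using hi choose_mono_deg[OF n L] by linarith
  ultimately have dimE: "vector_space.dim (\<lambda>c (v :: nat \<Rightarrow> 'k). (\<lambda>i. c * v i)) ?E = r"
    by (simp add: conditions_imposed_def)
  define w' where "w' i = (if i < r then w i else 0)" for i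
  have "w' \<in> ?E"
  proof (rule full_dim[OF dimE])
    fix v assume "v \<in> ?E" then show "\<forall>i\<ge>r. v i = 0" by (auto simp: eval_vectors_def)
  next
    have "(0 :: nat \<Rightarrow> 'k) = (\<lambda>i. if i < r then peval 0 (P i) else 0)" by (simp add: fun_eq_iff)
    then show "0 \<in> ?E" unfolding eval_vectors_def by force
  next
    fix x y assume "x \<in> ?E" "y \<in> ?E"
    then obtain f g where f: "f \<in> polys n" "homog (int L) f" "x = (\<lambda>i. if i < r then peval f (P i) else 0)"
      and g: "g \<in> polys n" "homog (int L) g" "y = (\<lambda>i. if i < r then peval g (P i) else 0)"
      unfolding eval_vectors_def by blast
    have "x + y = (\<lambda>i. if i < r then peval (f + g) (P i) else 0)"
      using f g by (simp add: fun_eq_iff peval_add)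
    moreover have "f + g \<in> polys n" "homog (int L) (f + g)" using f g by (simp_all add: polys_add homog_add)
    ultimately show "x + y \<in> ?E" unfolding eval_vectors_def by blast
  next
    fix c x assume "x \<in> ?E"
    then obtain f where f: "f \<in> polys n" "homog (int L) f" "x = (\<lambda>i. if i < r then peval f (P i) else 0)"
      unfolding eval_vectors_def by blast
    have "(\<lambda>i. c * x i) = (\<lambda>i. if i < r then peval (sg 0 c * f) (P i) else 0)"
      using f by (simp add: fun_eq_iff peval_mult peval_single)
    moreover have "sg 0 c * f \<in> polys n" using f by (simp add: polys_mult polys_single)
    moreover have "homog (int L) (sg 0 c * f)" using homog_mult[OF homog_single[of 0 c] f(2)] by simp
    ultimately show "(\<lambda>i. c * x i) \<in> ?E" unfolding eval_vectors_def by blast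
  next
    show "\<forall>i\<ge>r. w' i = 0" by (simp add: w'_def)
  qed
  then obtain f where f: "f \<in> polys n" "homog (int L) f" "w' = (\<lambda>i. if i < r then peval f (P i) else 0)"
    unfolding eval_vectors_def by blast
  have "\<forall>i<r. peval f (P i) = w i"
  proof (intro allI impI)
    fix i assume "i < r"
    then show "peval f (P i) = w i" using fun_cong[OF f(3), of i] by (simp add: w'_def)
  qed
  then show ?thesis using f by blast
qed

lemma part2:
  fixes P :: "nat \<Rightarrow> nat \<Rightarrow> 'k::field_char_0"
  assumes n: "n \<ge> 1" and gp: "general_position n r P" and hi: "r \<le> (n + d - 1) choose d"
    and l: "l \<ge> int d - 1"
  shows "K_deg r (l + 1) = O_deg n r P (l + 1)"
proof
  show "O_deg n r P (l + 1) \<subseteq> K_deg r (l + 1)" by (simp add: O_deg_def)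
  show "K_deg r (l + 1) \<subseteq> O_deg n r P (l + 1)"
  proof
    fix c :: "nat \<Rightarrow> int \<Rightarrow> 'k" assume c: "c \<in> K_deg r (l + 1)"
    then have c0: "\<And>i e. c i e \<noteq> 0 \<Longrightarrow> i < r \<and> e = l + 1" by (simp add: K_deg_def)
    define L where "L = nat (l + 1)"
    have lL: "l + 1 = int L" using l by (simp add: L_def)
    have dL: "d \<le> L" using l by (simp add: L_def)
    obtain F where F: "F \<in> polys n" "homog (int L) F" "\<forall>i<r. peval F (P i) = c i (l + 1)"
      using surj_eval[OF n gp hi dL, of "\<lambda>i. c i (l + 1)"] by blast
    have "embK r P F = c"
    proof (intro ext)
      fix i e
      show "embK r P F i e = c i e"
      proof (cases "i < r \<and> 0 \<le> e")
        case True
        show ?thesis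
        proof (cases "e = l + 1")
          case True
          then have "hcomp (nat e) F = F" using lL hcomp_homog_same[of L F] F(2) by simp
          then show ?thesis using \<open>i < r \<and> 0 \<le> e\<close> F(3) True by (simp add: embK_def)
        next
          case False
          then have "hcomp (nat e) F = 0" using \<open>i < r \<and> 0 \<le> e\<close> lL by (intro hcomp_homog_other[OF F(2)]) simp
          moreover have "c i e = 0" using c0[of i e] False by blast
          ultimately show ?thesis using \<open>i < r \<and> 0 \<le> e\<close> by (simp add: embK_def)
        qed
      next
        case False
        then have "c i e = 0" using c0[of i e] lL by force
        then show ?thesis using False by (auto simp: embK_def)
      qed
    qed
    then show "c \<in> O_deg n r P (l + 1)" using c F(1) by (auto simp: O_deg_def)
  qed
qed

theorem mainTheorem2:
  fixes n r :: nat and P :: "nat \<Rightarrow> nat \<Rightarrow> 'k::{alg_closed_field, field_char_0}"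
  assumes "n \<ge> 1" and "proj_points n r P"
  shows "(\<forall>l::int. K_deg r (l + 1) = O_deg n r P (l + 1)
                    \<longrightarrow> T1_vanishes n (cone_ideal n r P) l)
     \<and> (\<forall>d::nat. general_position n r P \<longrightarrow>
          (if d = 0 then 0 else (n + d - 2) choose (d - 1)) < r \<longrightarrow>
          r \<le> (n + d - 1) choose d \<longrightarrow>
          (\<forall>l::int. l \<ge> int d - 1 \<longrightarrow> T1_vanishes n (cone_ideal n r P) l))"
proof (intro conjI allI impI)
  fix l :: int
  assume "K_deg r (l + 1) = O_deg n r P (l + 1)"
  then show "T1_vanishes n (cone_ideal n r P) l" by (rule part1[OF assms(2)])
next
  fix d :: nat and l :: int
  assume gp: "general_position n r P" and hi: "r \<le> (n + d - 1) choose d" and l: "l \<ge> int d - 1"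
  show "T1_vanishes n (cone_ideal n r P) l"
    by (rule part1[OF assms(2) part2[OF assms(1) gp hi l]])
qed



end
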